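(* Consider the autonomous system in the context, let $\bar\theta^0=(\bar F^0,\mu^0,o^0)\in\Theta$ be any initial condition, and let $o(t)=o(t;\bar\theta^0)$ be the $o$-component of its solution. Then the state $(\bar F,\mu)=(0,\mu^* )$ is a globally asymptotically stable equilibrium of the time-dependent system $$\dot{\bar F}_k=\frac1K\sum_{j}\frac{e^{\bar F_j}}{\sum_\ell\pi_\ell(\bar\theta)e^{\bar F_\ell}}-\frac{e^{\bar F_k}}{\sum_\ell\pi_\ell(\bar\theta)e^{\bar F_\ell}},\qquad \dot\mu_{km}=\frac{e^{\bar F_k}}{\sum_\ell\pi_\ell(\bar\theta)e^{\bar F_\ell}}(\mu^*_{km}-\mu_{km}),$$ where $\bar\theta=(\bar F,\mu,o(t))$, uniformly in the trajectory $o(t)$ (the time $T(\rho,\eta)$ in the definition of global asymptotic stability can be chosen independently of $o(\cdot)$).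
   Context: $K\ge2$, $M\ge1$, $\varepsilon>0$, $\mathcal{P}^\varepsilon(K)$ is the set of probability vectors on $[K]$ with entries $\ge\varepsilon$, and $O^\varepsilon=\{o\in\mathbb{R}^K_{\ge0}:\sum_ko_k\le\varepsilon^{-1}\}$. $\Theta=\mathbb{R}^K\times\mathbb{R}^{KM}\times O^\varepsilon$; $\pi:\Theta\to\mathcal P^\varepsilon(K)$ and $\gamma:\mathbb{R}^{KM}\to\mathcal P^\varepsilon(K)$ are continuously differentiable, and $\mu^*\in\mathbb{R}^{KM}$ is fixed. The autonomous system $\dot{\bar\theta}=\bar g(\bar\theta)$ is given by the two equations displayed in the claim (with $\bar\theta=(\bar F,\mu,o)$) together with $\dot o_k=\dfrac{\pi_k(\bar\theta)}{\gamma_k(\mu)}\dfrac{e^{\bar F_k}}{\sum_\ell\pi_\ell(\bar\theta)e^{\bar F_\ell}}-o_k$. Here $\bar F$ ranges over the hyperplane $\{\sum_k\bar F_k=0\}$ (representing free energies modulo additive constants, shifted so that the exact free energy is $0$), with norm $\|\bar F\|_{\mathbb L}=\|\bar F\|$; distances in $(\bar F,\mu)$ are $\|\bar F\|+\|\mu-\mu^*\|$. Global asymptotic stability of $z^*$ for $\dot z=h(z,t)$: (1) for each $\eta>0$ there is $\delta>0$ independent of $t_0$ with $|z_0-z^*|<\delta\Rightarrow|z(t;z_0,t_0)-z^*|<\eta$ for all $t\ge t_0\ge0$; (2) for all $\eta,\rho>0$ there is $T(\rho,\eta)<\infty$ independent of $t_0$ with $|z(t;z_0,t_0)-z^*|<\eta$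 for all $t\ge t_0+T$ whenever $|z_0-z^*|<\rho$. *)

theory Defs
  imports "HOL-Analysis.Analysis"
begin

text \<open>Indices: k ranges over the finite type 'k (so K = CARD('k)), m over 'm (M = CARD('m)).
  Free energies F :: real^'k, means mu :: real^'m^'k (an element of R^(KM)), o :: real^'k.\<close>

definition Peps :: "real \<Rightarrow> (real^'k) set" where
  "Peps \<epsilon> = {p. (\<forall>k. p $ k \<ge> \<epsilon>) \<and> (\<Sum>k\<in>UNIV. p $ k) = 1}"

definition Oeps :: "real \<Rightarrow> (real^'k) set" where
  "Oeps \<epsilon> = {ov. (\<forall>k. ov $ k \<ge> 0) \<and> (\<Sum>k\<in>UNIV. ov $ k) \<le> 1 / \<epsilon>}"

definition Theta :: "real \<Rightarrow> ((real^'k) \<times> (real^'m^'k) \<times> (real^'k)) set" where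
  "Theta \<epsilon> = UNIV \<times> UNIV \<times> Oeps \<epsilon>"

definition Hyp :: "(real^'k) set" where
  "Hyp = {F. (\<Sum>k\<in>UNIV. F $ k) = 0}"

definition C1_on :: "'a::real_normed_vector set \<Rightarrow> ('a \<Rightarrow> 'b::real_normed_vector) \<Rightarrow> bool" where
  "C1_on S f \<longleftrightarrow> (\<exists>f'. continuous_on S f' \<and>
      (\<forall>x\<in>S. (f has_derivative blinfun_apply (f' x)) (at x within S)))"

definition wgt :: "((real^'k) \<times> (real^'m^'k) \<times> (real^'k) \<Rightarrow> real^'k) \<Rightarrow>
    real^'k \<Rightarrow> real^'m^'k \<Rightarrow> real^'k \<Rightarrow> 'k \<Rightarrow> real" where
  "wgt \<pi> F \<mu> ov k = exp (F $ k) / (\<Sum>l\<in>UNIV. \<pi> (F, \<mu>, ov) $ l * exp (F $ l))"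

definition Fdot :: "((real^'k) \<times> (real^'m^'k) \<times> (real^'k) \<Rightarrow> real^'k) \<Rightarrow>
    real^'k \<Rightarrow> real^'m^'k \<Rightarrow> real^'k \<Rightarrow> real^'k" where
  "Fdot \<pi> F \<mu> ov = (\<chi> k. (1 / real CARD('k)) * (\<Sum>j\<in>UNIV. wgt \<pi> F \<mu> ov j) - wgt \<pi> F \<mu> ov k)"

definition mudot :: "((real^'k) \<times> (real^'m^'k) \<times> (real^'k) \<Rightarrow> real^'k) \<Rightarrow> real^'m^'k \<Rightarrow>
    real^'k \<Rightarrow> real^'m^'k \<Rightarrow> real^'k \<Rightarrow> real^'m^'k" where
  "mudot \<pi> \<mu>s F \<mu> ov = (\<chi> k. \<chi> m. wgt \<pi> F \<mu> ov k * (\<mu>s $ k $ m - \<mu> $ k $ m))"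

definition odot :: "((real^'k) \<times> (real^'m^'k) \<times> (real^'k) \<Rightarrow> real^'k) \<Rightarrow> (real^'m^'k \<Rightarrow> real^'k) \<Rightarrow>
    real^'k \<Rightarrow> real^'m^'k \<Rightarrow> real^'k \<Rightarrow> real^'k" where
  "odot \<pi> \<gamma> F \<mu> ov = (\<chi> k. \<pi> (F, \<mu>, ov) $ k / \<gamma> \<mu> $ k * wgt \<pi> F \<mu> ov k - ov $ k)"

definition auton_sol where
  "auton_sol \<epsilon> \<pi> \<gamma> \<mu>s th0 th \<longleftrightarrow> th 0 = th0 \<and>
     (\<forall>t\<ge>0. th t \<in> Theta \<epsilon> \<and>
        (th has_vector_derivative
           (case th t of (F, \<mu>, ov) \<Rightarrow> (Fdot \<pi> F \<mu> ov, mudot \<pi> \<mu>s F \<mu> ov, odot \<pi> \<gamma> F \<mu> ov)))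
        (at t within {0..}))"

definition nonauton_sol where
  "nonauton_sol \<pi> \<mu>s (ot :: real \<Rightarrow> real^'k) t0 z0 z \<longleftrightarrow> z t0 = z0 \<and>
     (\<forall>t\<ge>t0. (z has_vector_derivative
           (case z t of (F, \<mu>) \<Rightarrow> (Fdot \<pi> F \<mu> (ot t), mudot \<pi> \<mu>s F \<mu> (ot t))))
        (at t within {t0..}))"

definition zdist :: "real^'m^'k \<Rightarrow> (real^'k) \<times> (real^'m^'k) \<Rightarrow> real" where
  "zdist \<mu>s z = norm (fst z) + norm (snd z - \<mu>s)"

end

theory Submission
  imports Defs
begin

lemma decay:
  fixes f f' :: "real \<Rightarrow> real"
  assumes d: "\<And>t. t \<ge> a \<Longrightarrow> (f has_real_derivative f' t) (at t within {a..})"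
    and b: "\<And>t. t \<ge> a \<Longrightarrow> f' t \<le> - c * f t"
    and at: "a \<le> t"
  shows "f t \<le> f a * exp (- c * (t - a))"
proof -
  define g where "g s = - (f s * exp (c * (s - a)))" for s
  have dg: "(g has_real_derivative - ((f' s + c * f s) * exp (c * (s - a)))) (at s within {a..})"
    if "s \<ge> a" for s
    unfolding g_def
    by (rule derivative_eq_intros d[OF that] refl | simp add: algebra_simps)+
  have "g a \<le> g t"
  proof (rule DERIV_nonneg_imp_increasing_open[OF at])
    fix x assume x: "a < x" "x < t"
    have "at x within {a..} = at x"
      by (rule at_within_interior) (use x in auto)
    then have "(g has_real_derivative - ((f' x + c * f x) * exp (c * (x - a)))) (at x)"
      using dg[of x] x by simp
    moreover have "0 \<le> - ((f' x + c * f x) * exp (c * (x - a)))"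
      using b[of x] x by (simp add: mult_nonpos_nonneg mult_le_0_iff)
    ultimately show "\<exists>y. DERIV g x :> y \<and> 0 \<le> y" by blast
  next
    show "continuous_on {a..t} g"
      unfolding continuous_on_eq_continuous_within
    proof
      fix x assume x: "x \<in> {a..t}"
      have "continuous (at x within {a..}) g"
        by (rule DERIV_continuous[OF dg]) (use x in auto)
      then show "continuous (at x within {a..t}) g"
        by (rule continuous_within_subset) auto
    qed
  qed
  then have "f t * exp (c * (t - a)) \<le> f a" by (simp add: g_def)
  then have "f t * exp (c * (t - a)) * exp (- c * (t - a)) \<le> f a * exp (- c * (t - a))"
    by (simp add: mult_right_mono)
  then show ?thesis by (simp add: mult.assoc flip: exp_add)
qed

lemma scal:
  fixes x r :: real
  assumes "\<bar>x\<bar> \<le> r"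
  shows "exp (- r) * x^2 \<le> x * (exp x - 1)"
proof (cases "x \<ge> 0")
  case True
  have "x \<le> exp x - 1" using exp_ge_add_one_self[of x] by linarith
  then have "x * x \<le> x * (exp x - 1)" using True by (simp add: mult_left_mono)
  moreover have "exp (-r) * x^2 \<le> x^2"
  proof -
    have "exp (-r) \<le> 1" using assms True by simp
    then show ?thesis by (intro mult_left_le_one_le) auto
  qed
  ultimately show ?thesis by (simp add: power2_eq_square)
next
  case False
  have "- x \<le> exp (-x) - 1" using exp_ge_add_one_self[of "-x"] by linarith
  then have "(- x) * exp x \<le> (exp (-x) - 1) * exp x" by (rule mult_right_mono) simp
  also have "\<dots> = 1 - exp x" by (simp add: algebra_simps flip: exp_add)
  finally have h: "(- x) * exp x \<le> 1 - exp x" .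
  have "exp (-r) \<le> exp x" using assms False by simp
  then have "exp (-r) * x^2 \<le> exp x * x^2" by (simp add: mult_right_mono)
  also have "\<dots> = (-x) * ((-x) * exp x)" by (simp add: power2_eq_square)
  also have "\<dots> \<le> (-x) * (1 - exp x)" by (rule mult_left_mono) (use h False in auto)
  also have "\<dots> = x * (exp x - 1)" by (simp add: algebra_simps)
  finally show ?thesis .
qed

lemma core:
  fixes \<pi> :: "(real^'k) \<times> (real^'m^'k) \<times> (real^'k) \<Rightarrow> real^'k" and \<mu>s :: "real^'m^'k"
    and F :: "real \<Rightarrow> real^'k" and M :: "real \<Rightarrow> real^'m^'k" and ov :: "real \<Rightarrow> real^'k"
  assumes eps: "\<epsilon> > 0"
    and pp: "\<And>t l. t \<ge> t0 \<Longrightarrow> \<pi> (F t, M t, ov t) $ l \<ge> \<epsilon>"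
    and ps: "\<And>t. t \<ge> t0 \<Longrightarrow> (\<Sum>l\<in>UNIV. \<pi> (F t, M t, ov t) $ l) = 1"
    and dF: "\<And>t. t \<ge> t0 \<Longrightarrow> (F has_vector_derivative Fdot \<pi> (F t) (M t) (ov t)) (at t within {t0..})"
    and dM: "\<And>t. t \<ge> t0 \<Longrightarrow> (M has_vector_derivative mudot \<pi> \<mu>s (F t) (M t) (ov t)) (at t within {t0..})"
    and hyp: "(\<Sum>k\<in>UNIV. F t0 $ k) = 0"
    and r: "norm (F t0) \<le> r"
    and tt: "t \<ge> t0"
  shows "norm (F t) \<le> norm (F t0) * exp (- exp (-2*r) * (t - t0)) \<and>
         norm (M t - \<mu>s) \<le> norm (M t0 - \<mu>s) * exp (- exp (-2*r) * (t - t0))"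
proof -
  define c where "c = exp (-2*r)"
  have cpos: "c > 0" by (simp add: c_def)
  define S where "S s = (\<Sum>l\<in>UNIV. \<pi> (F s, M s, ov s) $ l * exp (F s $ l))" for s
  define w where "w s k = wgt \<pi> (F s) (M s) (ov s) k" for s k
  have w_eq: "w s k = exp (F s $ k) / S s" for s k
    by (simp add: w_def wgt_def S_def)
  have Spos: "S s > 0" if "s \<ge> t0" for s
    unfolding S_def
    by (rule sum_pos) (auto intro!: mult_pos_pos less_le_trans[OF eps pp[OF that]])
  have wpos: "w s k > 0" if "s \<ge> t0" for s k
    using Spos[OF that] by (simp add: w_eq)
  have Fdk: "Fdot \<pi> (F s) (M s) (ov s) $ k = (1 / real CARD('k)) * (\<Sum>j\<in>UNIV. w s j) - w s k" for s k
    by (simp add: Fdot_def w_def)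
  have Mdk: "mudot \<pi> \<mu>s (F s) (M s) (ov s) $ k $ m = w s k * (\<mu>s $ k $ m - M s $ k $ m)" for s k m
    by (simp add: mudot_def w_def)
  define one :: "real^'k" where "one = (\<chi> k. 1)"
  have sumF: "(\<Sum>k\<in>UNIV. F s $ k) = F s \<bullet> one" for s
    by (simp add: one_def inner_vec_def)
  have dsum: "((\<lambda>s. F s \<bullet> one) has_real_derivative 0) (at s within {t0..})" if "s \<ge> t0" for s
  proof -
    have "((\<lambda>s. F s \<bullet> one) has_vector_derivative (Fdot \<pi> (F s) (M s) (ov s) \<bullet> one)) (at s within {t0..})"
      by (rule bounded_linear.has_vector_derivative[OF bounded_linear_inner_left dF[OF that]])
    moreover have "Fdot \<pi> (F s) (M s) (ov s) \<bullet> one = 0"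
      by (simp add: one_def inner_vec_def Fdk sum_subtractf)
    ultimately show ?thesis by (simp add: has_real_derivative_iff_has_vector_derivative)
  qed
  have sum0: "(\<Sum>k\<in>UNIV. F s $ k) = 0" if "s \<ge> t0" for s
  proof -
    have h1: "F s \<bullet> one \<le> F t0 \<bullet> one * exp (- 0 * (s - t0))"
      by (rule decay[where f' = "\<lambda>_. 0"]) (use dsum that in auto)
    have dm: "((\<lambda>s. - (F s \<bullet> one)) has_real_derivative 0) (at u within {t0..})" if "u \<ge> t0" for u
      using DERIV_minus[OF dsum[OF that]] by simp
    have h2: "- (F s \<bullet> one) \<le> - (F t0 \<bullet> one) * exp (- 0 * (s - t0))"
      by (rule decay[where f' = "\<lambda>_. 0" and f = "\<lambda>s. - (F s \<bullet> one)"])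
         (use dm that in auto)
    show ?thesis using h1 h2 hyp by (simp add: sumF)
  qed
  define X where "X s = (\<Sum>k\<in>UNIV. F s $ k * (exp (F s $ k) - 1))" for s
  have Xnn: "X s \<ge> 0" for s
    unfolding X_def
  proof (rule sum_nonneg)
    fix k
    have "0 \<le> exp (- \<bar>F s $ k\<bar>) * (F s $ k)^2" by simp
    also have "\<dots> \<le> F s $ k * (exp (F s $ k) - 1)" by (rule scal) simp
    finally show "0 \<le> F s $ k * (exp (F s $ k) - 1)" .
  qed
  have FFd: "F s \<bullet> Fdot \<pi> (F s) (M s) (ov s) = - X s / S s" if "s \<ge> t0" for s
  proof -
    define A where "A = (1 / real CARD('k)) * (\<Sum>j\<in>UNIV. w s j)"
    have "F s \<bullet> Fdot \<pi> (F s) (M s) (ov s) = (\<Sum>k\<in>UNIV. F s $ k * (A - w s k))"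
      by (simp add: inner_vec_def Fdk A_def)
    also have "\<dots> = (\<Sum>k\<in>UNIV. F s $ k * A) - (\<Sum>k\<in>UNIV. F s $ k * w s k)"
      by (simp only: right_diff_distrib sum_subtractf)
    also have "\<dots> = (\<Sum>k\<in>UNIV. F s $ k) * A - (\<Sum>k\<in>UNIV. F s $ k * w s k)"
      by (simp only: sum_distrib_right)
    also have "\<dots> = - (\<Sum>k\<in>UNIV. F s $ k * w s k)" using sum0[OF that] by simp
    finally have e1: "F s \<bullet> Fdot \<pi> (F s) (M s) (ov s) = - (\<Sum>k\<in>UNIV. F s $ k * w s k)" .
    have e2: "(\<Sum>k\<in>UNIV. F s $ k * w s k) = (\<Sum>k\<in>UNIV. F s $ k * exp (F s $ k)) / S s"
      by (simp add: w_eq sum_divide_distrib)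
    have e3: "(\<Sum>k\<in>UNIV. F s $ k * exp (F s $ k)) = X s"
      using sum0[OF that] by (simp add: X_def right_diff_distrib sum_subtractf)
    show ?thesis using e1 e2 e3 by simp
  qed
  define V where "V s = F s \<bullet> F s" for s
  have dV: "(V has_real_derivative 2 * (F s \<bullet> Fdot \<pi> (F s) (M s) (ov s))) (at s within {t0..})" if "s \<ge> t0" for s
  proof -
    have "(V has_vector_derivative (F s \<bullet> Fdot \<pi> (F s) (M s) (ov s) + Fdot \<pi> (F s) (M s) (ov s) \<bullet> F s)) (at s within {t0..})"
      unfolding V_def
      by (rule bounded_bilinear.has_vector_derivative[OF bounded_bilinear_inner dF[OF that] dF[OF that]])
    then show ?thesis by (simp add: has_real_derivative_iff_has_vector_derivative inner_commute)
  qed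
  have Vd0: "2 * (F u \<bullet> Fdot \<pi> (F u) (M u) (ov u)) \<le> - 0 * V u" if "u \<ge> t0" for u
  proof -
    have "0 \<le> X u / S u" using Xnn[of u] Spos[OF that] by simp
    then show ?thesis using FFd[OF that] by simp
  qed
  have Vmono: "V s \<le> V t0" if "s \<ge> t0" for s
  proof -
    have "V s \<le> V t0 * exp (- 0 * (s - t0))"
      by (rule decay[OF dV Vd0 that])
    then show ?thesis by simp
  qed
  have nF: "norm (F s) \<le> r" if "s \<ge> t0" for s
  proof -
    have "sqrt (V s) \<le> sqrt (V t0)" using Vmono[OF that] by simp
    then have "norm (F s) \<le> norm (F t0)" by (simp add: V_def norm_eq_sqrt_inner)
    then show ?thesis using r by linarith
  qed
  have Fk: "\<bar>F s $ k\<bar> \<le> r" if "s \<ge> t0" for s k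
    using component_le_norm_cart[of "F s" k] nF[OF that] by linarith
  have Sle: "S s \<le> exp r" if "s \<ge> t0" for s
  proof -
    have "S s \<le> (\<Sum>l\<in>UNIV. \<pi> (F s, M s, ov s) $ l * exp r)"
      unfolding S_def
      by (rule sum_mono, rule mult_left_mono) (use Fk[OF that] in \<open>auto simp: abs_le_iff intro: order_trans[OF less_imp_le[OF eps] pp[OF that]]\<close>)
    also have "\<dots> = exp r" by (simp only: sum_distrib_right[symmetric] ps[OF that] mult_1)
    finally show ?thesis .
  qed
  have ce: "exp (-r) / exp r = c"
  proof -
    have "-r - r = -2*r" by simp
    then show ?thesis unfolding c_def exp_diff[symmetric] by simp
  qed
  have wge: "w s k \<ge> c" if "s \<ge> t0" for s k
  proof -
    have "exp (-r) / exp r \<le> exp (-r) / S s"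
      by (rule divide_left_mono) (use Sle[OF that] Spos[OF that] in auto)
    also have "\<dots> \<le> exp (F s $ k) / S s"
      by (rule divide_right_mono) (use Fk[OF that, of k] Spos[OF that] in auto)
    finally show ?thesis by (simp add: w_eq ce)
  qed
  have VF: "V s = (\<Sum>k\<in>UNIV. (F s $ k)^2)" for s by (simp add: V_def inner_vec_def power2_eq_square)
  have Xge: "X s \<ge> exp (-r) * V s" if "s \<ge> t0" for s
    unfolding X_def VF sum_distrib_left
    by (rule sum_mono) (use scal Fk[OF that] in auto)
  have Fdec: "2 * (F s \<bullet> Fdot \<pi> (F s) (M s) (ov s)) \<le> - (2*c) * V s" if "s \<ge> t0" for s
  proof -
    have V0: "V s \<ge> 0" by (simp add: V_def)
    have "exp (-r) * V s / exp r \<le> X s / exp r" using Xge[OF that] by (simp add: divide_right_mono)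
    also have "\<dots> \<le> X s / S s"
      by (rule divide_left_mono) (use Sle[OF that] Spos[OF that] Xnn in auto)
    finally have "exp (-r) * V s / exp r \<le> X s / S s" .
    moreover have "exp (-r) * V s / exp r = c * V s" by (simp flip: ce)
    ultimately have "c * V s \<le> X s / S s" by simp
    then show ?thesis using FFd[OF that] by simp
  qed
  have Vdec: "V t \<le> V t0 * exp (- (2*c) * (t - t0))"
    by (rule decay[OF dV Fdec tt])
  have sq: "sqrt (a * exp (- (2*c) * (t - t0))) = sqrt a * exp (- c * (t - t0))" for a
  proof -
    have "exp (- (2*c) * (t - t0)) = (exp (- c * (t - t0)))^2"
      by (simp add: power2_eq_square flip: exp_add)
    then show ?thesis by (simp add: real_sqrt_mult)
  qed
  have part1: "norm (F t) \<le> norm (F t0) * exp (- c * (t - t0))"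
  proof -
    have "norm (F t) = sqrt (V t)" by (simp add: V_def norm_eq_sqrt_inner)
    also have "\<dots> \<le> sqrt (V t0 * exp (- (2*c) * (t - t0)))" using Vdec by simp
    also have "\<dots> = sqrt (V t0) * exp (- c * (t - t0))" by (rule sq)
    also have "sqrt (V t0) = norm (F t0)" by (simp add: V_def norm_eq_sqrt_inner)
    finally show ?thesis .
  qed
  define W where "W s = (M s - \<mu>s) \<bullet> (M s - \<mu>s)" for s
  define Md where "Md s = mudot \<pi> \<mu>s (F s) (M s) (ov s)" for s
  have dW: "(W has_real_derivative 2 * ((M s - \<mu>s) \<bullet> Md s)) (at s within {t0..})" if "s \<ge> t0" for s
  proof -
    have d1: "((\<lambda>s. M s - \<mu>s) has_vector_derivative Md s) (at s within {t0..})"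
      using dM[OF that] by (simp add: has_vector_derivative_diff_const Md_def)
    have "(W has_vector_derivative ((M s - \<mu>s) \<bullet> Md s + Md s \<bullet> (M s - \<mu>s))) (at s within {t0..})"
      unfolding W_def
      by (rule bounded_bilinear.has_vector_derivative[OF bounded_bilinear_inner d1 d1])
    then show ?thesis by (simp add: has_real_derivative_iff_has_vector_derivative inner_commute)
  qed
  define Q where "Q s k = (\<Sum>m\<in>UNIV. (M s $ k $ m - \<mu>s $ k $ m)^2)" for s k
  have WQ: "W s = (\<Sum>k\<in>UNIV. Q s k)" for s
    by (simp add: W_def Q_def inner_vec_def power2_eq_square)
  have MMd: "(M s - \<mu>s) \<bullet> Md s = - (\<Sum>k\<in>UNIV. w s k * Q s k)" for s
  proof -
    have "(M s - \<mu>s) \<bullet> Md s = (\<Sum>k\<in>UNIV. \<Sum>m\<in>UNIV. (M s $ k $ m - \<mu>s $ k $ m) * (w s k * (\<mu>s $ k $ m - M s $ k $ m)))"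
      by (simp add: inner_vec_def Md_def Mdk)
    also have "\<dots> = (\<Sum>k\<in>UNIV. - (w s k * Q s k))"
    proof (rule sum.cong[OF refl])
      fix k
      have "(\<Sum>m\<in>UNIV. (M s $ k $ m - \<mu>s $ k $ m) * (w s k * (\<mu>s $ k $ m - M s $ k $ m)))
          = (\<Sum>m\<in>UNIV. - (w s k * (M s $ k $ m - \<mu>s $ k $ m)^2))"
        by (rule sum.cong[OF refl]) (simp add: power2_eq_square algebra_simps)
      also have "\<dots> = - (w s k * Q s k)"
        by (simp only: sum_negf sum_distrib_left[symmetric] Q_def)
      finally show "(\<Sum>m\<in>UNIV. (M s $ k $ m - \<mu>s $ k $ m) * (w s k * (\<mu>s $ k $ m - M s $ k $ m))) = - (w s k * Q s k)" .
    qed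
    also have "\<dots> = - (\<Sum>k\<in>UNIV. w s k * Q s k)" by (simp only: sum_negf)
    finally show ?thesis .
  qed
  have Wdec': "2 * ((M s - \<mu>s) \<bullet> Md s) \<le> - (2*c) * W s" if "s \<ge> t0" for s
  proof -
    have "c * W s \<le> (\<Sum>k\<in>UNIV. w s k * Q s k)"
      unfolding WQ sum_distrib_left
      by (rule sum_mono, rule mult_right_mono) (use wge[OF that] in \<open>auto simp: Q_def intro: sum_nonneg\<close>)
    then show ?thesis by (simp add: MMd)
  qed
  have Wdec: "W t \<le> W t0 * exp (- (2*c) * (t - t0))"
    by (rule decay[OF dW Wdec' tt])
  have part2: "norm (M t - \<mu>s) \<le> norm (M t0 - \<mu>s) * exp (- c * (t - t0))"
  proof -
    have "norm (M t - \<mu>s) = sqrt (W t)" by (simp add: W_def norm_eq_sqrt_inner)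
    also have "\<dots> \<le> sqrt (W t0 * exp (- (2*c) * (t - t0)))" using Wdec by simp
    also have "\<dots> = sqrt (W t0) * exp (- c * (t - t0))" by (rule sq)
    also have "sqrt (W t0) = norm (M t0 - \<mu>s)" by (simp add: W_def norm_eq_sqrt_inner)
    finally show ?thesis .
  qed
  show ?thesis using part1 part2 by (simp add: c_def)
qed


theorem proposition1:
  fixes \<pi> :: "(real^'k) \<times> (real^'m^'k) \<times> (real^'k) \<Rightarrow> real^'k"
    and \<gamma> :: "real^'m^'k \<Rightarrow> real^'k"
    and \<mu>s :: "real^'m^'k"
    and \<epsilon> :: real
  assumes K2: "CARD('k) \<ge> 2"
    and eps: "\<epsilon> > 0"
    and pi_range: "\<forall>th\<in>Theta \<epsilon>. \<pi> th \<in> Peps \<epsilon>"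
    and gamma_range: "\<forall>\<mu>. \<gamma> \<mu> \<in> Peps \<epsilon>"
    and pi_C1: "C1_on (Theta \<epsilon>) \<pi>"
    and gamma_C1: "C1_on UNIV \<gamma>"
  shows
    "(\<forall>ov\<in>Oeps \<epsilon>. Fdot \<pi> 0 \<mu>s ov = 0 \<and> mudot \<pi> \<mu>s 0 \<mu>s ov = 0)
     \<and> (\<forall>\<eta>>0. \<exists>\<delta>>0. \<forall>th0 th t0 z0 z.
           th0 \<in> Theta \<epsilon> \<and> fst th0 \<in> Hyp \<and> auton_sol \<epsilon> \<pi> \<gamma> \<mu>s th0 th \<and>
           t0 \<ge> 0 \<and> fst z0 \<in> Hyp \<and> zdist \<mu>s z0 < \<delta> \<and>
           nonauton_sol \<pi> \<mu>s (\<lambda>t. snd (snd (th t))) t0 z0 z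
           \<longrightarrow> (\<forall>t\<ge>t0. zdist \<mu>s (z t) < \<eta>))
     \<and> (\<forall>\<eta>>0. \<forall>\<rho>>0. \<exists>T. \<forall>th0 th t0 z0 z.
           th0 \<in> Theta \<epsilon> \<and> fst th0 \<in> Hyp \<and> auton_sol \<epsilon> \<pi> \<gamma> \<mu>s th0 th \<and>
           t0 \<ge> 0 \<and> fst z0 \<in> Hyp \<and> zdist \<mu>s z0 < \<rho> \<and>
           nonauton_sol \<pi> \<mu>s (\<lambda>t. snd (snd (th t))) t0 z0 z
           \<longrightarrow> (\<forall>t\<ge>t0 + T. zdist \<mu>s (z t) < \<eta>))"
proof -
  have P1: "\<forall>ov\<in>Oeps \<epsilon>. Fdot \<pi> 0 \<mu>s ov = 0 \<and> mudot \<pi> \<mu>s 0 \<mu>s ov = 0"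
    by (simp add: Fdot_def mudot_def wgt_def vec_eq_iff)
  have key: "zdist \<mu>s (z t) \<le> zdist \<mu>s z0 * exp (- exp (-2*r) * (t - t0))"
    if th0: "th0 \<in> Theta \<epsilon>" and as: "auton_sol \<epsilon> \<pi> \<gamma> \<mu>s th0 th" and t00: "t0 \<ge> 0"
      and hz: "fst z0 \<in> Hyp" and ns: "nonauton_sol \<pi> \<mu>s (\<lambda>t. snd (snd (th t))) t0 z0 z"
      and r: "norm (fst z0) \<le> r" and tt: "t \<ge> t0"
    for th0 th t0 z0 z r t
  proof -
    define F where "F s = fst (z s)" for s
    define M where "M s = snd (z s)" for s
    define ov where "ov s = snd (snd (th s))" for s
    have z0: "z t0 = z0" using ns by (simp add: nonauton_sol_def)
    have inP: "\<pi> (F s, M s, ov s) \<in> Peps \<epsilon>" if "s \<ge> t0" for s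
    proof -
      have "th s \<in> Theta \<epsilon>" using as that t00 by (simp add: auton_sol_def)
      then have "ov s \<in> Oeps \<epsilon>" by (auto simp: Theta_def ov_def)
      then have "(F s, M s, ov s) \<in> Theta \<epsilon>" by (simp add: Theta_def)
      then show ?thesis using pi_range by blast
    qed
    have pp: "\<pi> (F s, M s, ov s) $ l \<ge> \<epsilon>" if "s \<ge> t0" for s l
      using inP[OF that] by (simp add: Peps_def)
    have ps: "(\<Sum>l\<in>UNIV. \<pi> (F s, M s, ov s) $ l) = 1" if "s \<ge> t0" for s
      using inP[OF that] by (simp add: Peps_def)
    have dz: "(z has_vector_derivative (Fdot \<pi> (F s) (M s) (ov s), mudot \<pi> \<mu>s (F s) (M s) (ov s))) (at s within {t0..})"
      if "s \<ge> t0" for s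
      using ns that by (simp add: nonauton_sol_def F_def M_def ov_def case_prod_beta)
    have dF: "(F has_vector_derivative Fdot \<pi> (F s) (M s) (ov s)) (at s within {t0..})" if "s \<ge> t0" for s
      using bounded_linear.has_vector_derivative[OF bounded_linear_fst dz[OF that]]
      by (simp add: F_def[abs_def])
    have dM: "(M has_vector_derivative mudot \<pi> \<mu>s (F s) (M s) (ov s)) (at s within {t0..})" if "s \<ge> t0" for s
      using bounded_linear.has_vector_derivative[OF bounded_linear_snd dz[OF that]]
      by (simp add: M_def[abs_def])
    have hyp: "(\<Sum>k\<in>UNIV. F t0 $ k) = 0" using hz z0 by (simp add: Hyp_def F_def)
    have r': "norm (F t0) \<le> r" using r z0 by (simp add: F_def)
    have c: "norm (F t) \<le> norm (F t0) * exp (- exp (-2*r) * (t - t0)) \<and>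
         norm (M t - \<mu>s) \<le> norm (M t0 - \<mu>s) * exp (- exp (-2*r) * (t - t0))"
      by (rule core[OF eps pp ps dF dM hyp r' tt])
    then show ?thesis using z0
      by (simp add: zdist_def F_def M_def distrib_right)
  qed
  have P2: "\<forall>\<eta>>0. \<exists>\<delta>>0. \<forall>th0 th t0 z0 z.
           th0 \<in> Theta \<epsilon> \<and> fst th0 \<in> Hyp \<and> auton_sol \<epsilon> \<pi> \<gamma> \<mu>s th0 th \<and>
           t0 \<ge> 0 \<and> fst z0 \<in> Hyp \<and> zdist \<mu>s z0 < \<delta> \<and>
           nonauton_sol \<pi> \<mu>s (\<lambda>t. snd (snd (th t))) t0 z0 z
           \<longrightarrow> (\<forall>t\<ge>t0. zdist \<mu>s (z t) < \<eta>)"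
  proof (intro allI impI)
    fix \<eta> :: real assume "\<eta> > 0"
    show "\<exists>\<delta>>0. \<forall>th0 th t0 z0 z.
           th0 \<in> Theta \<epsilon> \<and> fst th0 \<in> Hyp \<and> auton_sol \<epsilon> \<pi> \<gamma> \<mu>s th0 th \<and>
           t0 \<ge> 0 \<and> fst z0 \<in> Hyp \<and> zdist \<mu>s z0 < \<delta> \<and>
           nonauton_sol \<pi> \<mu>s (\<lambda>t. snd (snd (th t))) t0 z0 z
           \<longrightarrow> (\<forall>t\<ge>t0. zdist \<mu>s (z t) < \<eta>)"
    proof (intro exI conjI allI impI)
      show "\<eta> > 0" by fact
      fix th0 th t0 z0 z t
      assume H: "th0 \<in> Theta \<epsilon> \<and> fst th0 \<in> Hyp \<and> auton_sol \<epsilon> \<pi> \<gamma> \<mu>s th0 th \<and>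
           t0 \<ge> 0 \<and> fst z0 \<in> Hyp \<and> zdist \<mu>s z0 < \<eta> \<and>
           nonauton_sol \<pi> \<mu>s (\<lambda>t. snd (snd (th t))) t0 z0 z" and tt: "t0 \<le> t"
      have k: "zdist \<mu>s (z t) \<le> zdist \<mu>s z0 * exp (- exp (-2 * norm (fst z0)) * (t - t0))"
        using H tt by (intro key[of th0 th t0 z0 z]) auto
      have z0n: "zdist \<mu>s z0 \<ge> 0" by (simp add: zdist_def)
      have "exp (- exp (-2 * norm (fst z0)) * (t - t0)) \<le> 1" using tt by simp
      then have "zdist \<mu>s z0 * exp (- exp (-2 * norm (fst z0)) * (t - t0)) \<le> zdist \<mu>s z0"
        using z0n by (simp add: mult_left_le)
      then show "zdist \<mu>s (z t) < \<eta>" using k H by linarith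
    qed
  qed
  have P3: "\<forall>\<eta>>0. \<forall>\<rho>>0. \<exists>T. \<forall>th0 th t0 z0 z.
           th0 \<in> Theta \<epsilon> \<and> fst th0 \<in> Hyp \<and> auton_sol \<epsilon> \<pi> \<gamma> \<mu>s th0 th \<and>
           t0 \<ge> 0 \<and> fst z0 \<in> Hyp \<and> zdist \<mu>s z0 < \<rho> \<and>
           nonauton_sol \<pi> \<mu>s (\<lambda>t. snd (snd (th t))) t0 z0 z
           \<longrightarrow> (\<forall>t\<ge>t0 + T. zdist \<mu>s (z t) < \<eta>)"
  proof (intro allI impI)
    fix \<eta> \<rho> :: real assume he: "\<eta> > 0" and hr: "\<rho> > 0"
    define c where "c = exp (-2 * \<rho>)"
    have cpos: "c > 0" by (simp add: c_def)
    define T where "T = \<bar>ln (\<rho> / \<eta>)\<bar> / c"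
    show "\<exists>T. \<forall>th0 th t0 z0 z.
           th0 \<in> Theta \<epsilon> \<and> fst th0 \<in> Hyp \<and> auton_sol \<epsilon> \<pi> \<gamma> \<mu>s th0 th \<and>
           t0 \<ge> 0 \<and> fst z0 \<in> Hyp \<and> zdist \<mu>s z0 < \<rho> \<and>
           nonauton_sol \<pi> \<mu>s (\<lambda>t. snd (snd (th t))) t0 z0 z
           \<longrightarrow> (\<forall>t\<ge>t0 + T. zdist \<mu>s (z t) < \<eta>)"
    proof (intro exI[of _ T] allI impI)
      fix th0 th t0 z0 z t
      assume H: "th0 \<in> Theta \<epsilon> \<and> fst th0 \<in> Hyp \<and> auton_sol \<epsilon> \<pi> \<gamma> \<mu>s th0 th \<and>
           t0 \<ge> 0 \<and> fst z0 \<in> Hyp \<and> zdist \<mu>s z0 < \<rho> \<and>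
           nonauton_sol \<pi> \<mu>s (\<lambda>t. snd (snd (th t))) t0 z0 z" and tt: "t0 + T \<le> t"
      have T0: "T \<ge> 0" using cpos by (simp add: T_def)
      have nr: "norm (fst z0) \<le> \<rho>" using H by (simp add: zdist_def) (smt (verit) norm_ge_zero)
      have k: "zdist \<mu>s (z t) \<le> zdist \<mu>s z0 * exp (- c * (t - t0))"
        unfolding c_def using H tt T0 nr by (intro key[of th0 th t0 z0 z]) auto
      have "- c * (t - t0) \<le> - c * T" using tt cpos by (simp add: mult_left_mono)
      also have "- c * T = - \<bar>ln (\<rho> / \<eta>)\<bar>" using cpos by (simp add: T_def)
      also have "\<dots> \<le> ln (\<eta> / \<rho>)" using he hr by (simp add: ln_div)
      finally have "exp (- c * (t - t0)) \<le> exp (ln (\<eta> / \<rho>))" by simp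
      also have "\<dots> = \<eta> / \<rho>" using he hr by simp
      finally have e: "exp (- c * (t - t0)) \<le> \<eta> / \<rho>" .
      have z0n: "zdist \<mu>s z0 \<ge> 0" by (simp add: zdist_def)
      have "zdist \<mu>s z0 * exp (- c * (t - t0)) \<le> zdist \<mu>s z0 * (\<eta> / \<rho>)"
        using e z0n by (rule mult_left_mono)
      also have "\<dots> < \<rho> * (\<eta> / \<rho>)" by (rule mult_strict_right_mono) (use H he hr in auto)
      also have "\<dots> = \<eta>" using hr by simp
      finally show "zdist \<mu>s (z t) < \<eta>" using k by linarith
    qed
  qed
  show ?thesis using P1 P2 P3 by blast
qed

end
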